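(* For every odd integer $\ell\ge 7$ there exists a binary palindrome of length $\ell$ whose critical exponent is exactly $\tfrac{7}{3}$.
   Context: A word $x=x[1..n]$ has period $q$ if $x[i]=x[i+q]$ for $1\le i\le n-q$. For integers $p>q\ge1$, $x$ is a $(p/q)$-power if it has length $p$ and period $q$. The exponent $\exp(w)$ of a finite nonempty word $w$ is the largest rational $p/q$ such that $w$ is a $(p/q)$-power (with $w$ of length $p$ and period $q$, $1\le q\le p$). The critical exponent of $w$ is the maximum of $\exp(w')$ over all nonempty factors $w'$ of $w$. A palindrome is a word equal to its reversal. *)

theory Defs
  imports Complex_Main "HOL-Library.Sublist"
begin

definition has_period :: "'a list \<Rightarrow> nat \<Rightarrow> bool" where
  "has_period x q \<longleftrightarrow> (\<forall>i. i + q < length x \<longrightarrow> x ! i = x ! (i + q))"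

definition word_exp :: "'a list \<Rightarrow> rat" where
  "word_exp w = Max {of_nat (length w) / of_nat q | q. 1 \<le> q \<and> q \<le> length w \<and> has_period w q}"

definition crit_exp :: "'a list \<Rightarrow> rat" where
  "crit_exp w = Max {word_exp u | u. u \<noteq> [] \<and> sublist u w}"

definition palindrome :: "'a list \<Rightarrow> bool" where
  "palindrome w \<longleftrightarrow> rev w = w"

end

theory Submission imports Defs begin
fun tm :: "nat \<Rightarrow> bool" where
  "tm n = (if n = 0 then False else (tm (n div 2) \<noteq> odd n))"
declare tm.simps[simp del]
lemma tm_even: "tm (2*q) = tm q"
  by (cases "q = 0") (simp_all add: tm.simps[of "2*q"] tm.simps[of 0])
lemma tm_odd: "tm (Suc (2*q)) = (\<not> tm q)"
  by (simp add: tm.simps[of "Suc (2*q)"])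
lemma tm4: "tm (4*a) = tm a" "tm (4*a+1) = (\<not> tm a)" "tm (4*a+2) = (\<not> tm a)" "tm (4*a+3) = tm a"
proof -
  have e: "4*a = 2*(2*a)" by simp
  show "tm (4*a) = tm a" by (simp only: e tm_even)
  have e1: "4*a+1 = Suc (2*(2*a))" by simp
  show "tm (4*a+1) = (\<not> tm a)" by (simp only: e1 tm_even tm_odd)
  have e2: "4*a+2 = 2 * Suc (2*a)" by simp
  show "tm (4*a+2) = (\<not> tm a)" by (simp only: e2 tm_even tm_odd)
  have e3: "4*a+3 = Suc (2 * Suc (2*a))" by simp
  show "tm (4*a+3) = tm a" by (simp only: e3 tm_even tm_odd not_not)
qed
lemma tmk: "tm (k + 4*a) = (if k mod 4 = 0 \<or> k mod 4 = 3 then tm (a + k div 4) else \<not> tm (a + k div 4))"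
proof -
  define b where "b = a + k div 4"
  have e: "k + 4*a = 4*b + k mod 4" unfolding b_def by simp
  have "k mod 4 = 0 \<or> k mod 4 = 1 \<or> k mod 4 = 2 \<or> k mod 4 = 3" by auto
  then show ?thesis unfolding e b_def[symmetric] using tm4[of b] by auto
qed

definition bv :: "nat \<Rightarrow> bool \<Rightarrow> bool \<Rightarrow> bool \<Rightarrow> bool" where
  "bv j x y z = [x, \<not>x, \<not>x, x, y, \<not>y, \<not>y, y, z, \<not>z, \<not>z, z] ! j"

lemma tm_bv: "j < 12 \<Longrightarrow> tm (4*a + j) = bv j (tm a) (tm (a+1)) (tm (a+2))"
proof -
  assume j: "j < 12"
  have t: "tm (4*a + j) = (if j mod 4 = 0 \<or> j mod 4 = 3 then tm (a + j div 4) else \<not> tm (a + j div 4))"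
    using tmk[of j a] by (simp add: add.commute)
  have "j = 0 \<or> j = 1 \<or> j = 2 \<or> j = 3 \<or> j = 4 \<or> j = 5 \<or> j = 6 \<or> j = 7 \<or> j = 8 \<or> j = 9 \<or> j = 10 \<or> j = 11"
    using j by presburger
  then show ?thesis using t by (elim disjE; simp add: bv_def)
qed

lemma tm_adj: "tm (2*s) \<noteq> tm (Suc (2*s))"
  by (simp add: tm_even tm_odd)

lemma no_cube: "\<not> (tm q = tm (Suc q) \<and> tm (Suc q) = tm (Suc (Suc q)))"
proof (cases "even q")
  case True
  then obtain s where q: "q = 2*s" by (rule evenE)
  have "tm q \<noteq> tm (Suc q)" unfolding q by (rule tm_adj)
  then show ?thesis by blast
next
  case False
  then obtain s where q0: "q = 2*s+1" by (rule oddE)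
  then have q: "q = Suc (2*s)" by simp
  have e: "Suc q = 2 * Suc s" "Suc (Suc q) = Suc (2 * Suc s)" using q by auto
  have "tm (Suc q) \<noteq> tm (Suc (Suc q))" unfolding e by (rule tm_adj)
  then show ?thesis by blast
qed

lemma all7: "(\<forall>i<7. P (i::nat)) = (P 0 \<and> P 1 \<and> P 2 \<and> P 3 \<and> P 4 \<and> P 5 \<and> P 6)"
  by (simp add: numeral_eq_Suc All_less_Suc2)
lemmas arith_n = add_0 add_0_right semiring_norm one_plus_numeral numeral_plus_one one_add_one
lemma sync_core1:
  assumes "r < 4" "r' < 4" "\<not>(x=y \<and> y=z)" "\<not>(x'=y' \<and> y'=z')"
    "\<forall>i<7. bv (r+i) x y z = bv (r'+i) x' y' z'"
  shows "r = r'"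
proof (rule ccontr)
  assume ne: "r \<noteq> r'"
  have h: "r = 0 \<or> r = 1 \<or> r = 2 \<or> r = 3" "r' = 0 \<or> r' = 1 \<or> r' = 2 \<or> r' = 3" using assms by auto
  from assms(5) have a: "bv (r+0) x y z = bv (r'+0) x' y' z'" "bv (r+1) x y z = bv (r'+1) x' y' z'"
    "bv (r+2) x y z = bv (r'+2) x' y' z'" "bv (r+3) x y z = bv (r'+3) x' y' z'"
    "bv (r+4) x y z = bv (r'+4) x' y' z'" "bv (r+5) x y z = bv (r'+5) x' y' z'" "bv (r+6) x y z = bv (r'+6) x' y' z'"
    unfolding all7 by simp_all
  show False using h a assms(3,4) ne
    by (elim disjE; hypsubst; simp (no_asm_use) add: bv_def; argo)
qed
lemma sync_core2:
  assumes "r < 4" "r' < 4" "\<not>(x=y \<and> y=z)" "\<not>(x'=y' \<and> y'=z')"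
    "\<forall>i<7. bv (r+i) x y z = bv (r'+(6-i)) x' y' z'"
  shows "(r + r' + 3) mod 4 = 0"
proof (rule ccontr)
  assume ne: "(r + r' + 3) mod 4 \<noteq> 0"
  have h: "r = 0 \<or> r = 1 \<or> r = 2 \<or> r = 3" "r' = 0 \<or> r' = 1 \<or> r' = 2 \<or> r' = 3" using assms by auto
  from assms(5) have a: "bv (r+0) x y z = bv (r'+6) x' y' z'" "bv (r+1) x y z = bv (r'+5) x' y' z'"
    "bv (r+2) x y z = bv (r'+4) x' y' z'" "bv (r+3) x y z = bv (r'+3) x' y' z'"
    "bv (r+4) x y z = bv (r'+2) x' y' z'" "bv (r+5) x y z = bv (r'+1) x' y' z'" "bv (r+6) x y z = bv (r'+0) x' y' z'"
    unfolding all7 by simp_all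
  show False using h a assms(3,4) ne
    by (elim disjE; hypsubst; simp (no_asm_use) add: bv_def; argo)
qed

lemma nc: "\<not> (tm a = tm (a+1) \<and> tm (a+1) = tm (a+2))"
  using no_cube[of a] by simp

lemma sync1:
  assumes "\<forall>i<7. tm (m+i) = tm (n+i)"
  shows "m mod 4 = n mod 4"
proof -
  define a b where "a = m div 4" and "b = n div 4"
  have "\<forall>i<7. bv (m mod 4 + i) (tm a) (tm (a+1)) (tm (a+2)) = bv (n mod 4 + i) (tm b) (tm (b+1)) (tm (b+2))"
  proof (intro allI impI)
    fix i :: nat assume i: "i < 7"
    have eq: "tm (m+i) = tm (n+i)" using assms i by blast
    have em: "m + i = 4*a + (m mod 4 + i)" and en: "n + i = 4*b + (n mod 4 + i)" unfolding a_def b_def by simp_all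
    have eq2: "tm (4*a + (m mod 4 + i)) = tm (4*b + (n mod 4 + i))" using eq by (simp only: em en)
    have e1: "tm (4*a + (m mod 4 + i)) = bv (m mod 4 + i) (tm a) (tm (a+1)) (tm (a+2))"
      by (rule tm_bv) (use i in simp)
    have e2: "tm (4*b + (n mod 4 + i)) = bv (n mod 4 + i) (tm b) (tm (b+1)) (tm (b+2))"
      by (rule tm_bv) (use i in simp)
    show "bv (m mod 4 + i) (tm a) (tm (a+1)) (tm (a+2)) = bv (n mod 4 + i) (tm b) (tm (b+1)) (tm (b+2))"
      by (rule trans[OF trans[OF e1[symmetric] eq2] e2])
  qed
  then show ?thesis by (rule sync_core1[OF _ _ nc[of a] nc[of b], rotated 2]) simp_all
qed

lemma sync2:
  assumes "\<forall>i<7. tm (m+i) = tm (n+(6-i))"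
  shows "(m + n + 3) mod 4 = 0"
proof -
  define a b where "a = m div 4" and "b = n div 4"
  have "\<forall>i<7. bv (m mod 4 + i) (tm a) (tm (a+1)) (tm (a+2)) = bv (n mod 4 + (6-i)) (tm b) (tm (b+1)) (tm (b+2))"
  proof (intro allI impI)
    fix i :: nat assume i: "i < 7"
    have eq: "tm (m+i) = tm (n+(6-i))" using assms i by blast
    have em: "m + i = 4*a + (m mod 4 + i)" and en: "n + (6-i) = 4*b + (n mod 4 + (6-i))" unfolding a_def b_def by simp_all
    have eq2: "tm (4*a + (m mod 4 + i)) = tm (4*b + (n mod 4 + (6-i)))" using eq by (simp only: em en)
    have e1: "tm (4*a + (m mod 4 + i)) = bv (m mod 4 + i) (tm a) (tm (a+1)) (tm (a+2))"
      by (rule tm_bv) (use i in simp)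
    have e2: "tm (4*b + (n mod 4 + (6-i))) = bv (n mod 4 + (6-i)) (tm b) (tm (b+1)) (tm (b+2))"
      by (rule tm_bv) (use i in simp)
    show "bv (m mod 4 + i) (tm a) (tm (a+1)) (tm (a+2)) = bv (n mod 4 + (6-i)) (tm b) (tm (b+1)) (tm (b+2))"
      by (rule trans[OF trans[OF e1[symmetric] eq2] e2])
  qed
  then have "(m mod 4 + n mod 4 + 3) mod 4 = 0" by (rule sync_core2[OF _ _ nc[of a] nc[of b], rotated 2]) simp_all
  then show ?thesis by presburger
qed

lemma overlap_free:
  "1 \<le> q \<Longrightarrow> \<forall>i\<le>q. tm (n+i) = tm (n+i+q) \<Longrightarrow> False"
proof (induction q arbitrary: n rule: less_induct)
  case (less q)
  show False
  proof (cases "even q")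
    case True
    then obtain h where q: "q = 2*h" by (rule evenE)
    with less.prems have h1: "1 \<le> h" "h < q" by auto
    define c where "c = n div 2"
    have "\<forall>i\<le>h. tm (c+i) = tm (c+i+h)"
    proof (intro allI impI)
      fix i assume i: "i \<le> h"
      have e: "tm (n + 2*i) = tm (n + 2*i + q)" using less.prems(2) i q by auto
      show "tm (c+i) = tm (c+i+h)"
      proof (cases "even n")
        case True
        then have q1: "n + 2*i = 2*(c+i)" "n + 2*i + q = 2*(c+i+h)" unfolding c_def using q by auto
        have "tm (n + 2*i) = tm (c+i)" "tm (n + 2*i + q) = tm (c+i+h)" by (simp only: q1(1) tm_even, simp only: q1(2) tm_even)
        then show ?thesis using e by simp
      next
        case False
        then have q1: "n + 2*i = Suc (2*(c+i))" "n + 2*i + q = Suc (2*(c+i+h))" unfolding c_def using q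
          by (auto elim!: oddE)
        have "tm (n + 2*i) = (\<not> tm (c+i))" "tm (n + 2*i + q) = (\<not> tm (c+i+h))" by (simp only: q1(1) tm_odd, simp only: q1(2) tm_odd)
        then show ?thesis using e by simp
      qed
    qed
    then show False using less.IH[OF h1(2) h1(1)] by blast
  next
    case False
    have A: "\<forall>k<2*q. tm (n+k) \<noteq> tm (n+k+1)"
    proof (intro allI impI)
      fix k assume k: "k < 2*q"
      have ev: "tm x \<noteq> tm (x+1)" if ev0: "even x" for x
      proof -
        obtain s where "x = 2*s" using ev0 by (rule evenE)
        then show ?thesis using tm_adj[of s] by simp
      qed
      show "tm (n+k) \<noteq> tm (n+k+1)"
      proof (cases "even (n+k)")
        case True then show ?thesis using ev by blast
      next
        case odd: False
        show ?thesis
        proof (cases "k < q")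
          case True
          have "even (n+k+q)" using odd False by simp
          then have "tm (n+k+q) \<noteq> tm (n+k+q+1)" using ev by blast
          moreover have "tm (n+k) = tm (n+k+q)" using less.prems(2) True by auto
          moreover have "tm (n+(k+1)) = tm (n+(k+1)+q)" using less.prems(2)[rule_format, of "k+1"] True by simp
          ultimately show ?thesis by (simp add: add.commute add.left_commute)
        next
          case False
          define k' where "k' = k - q"
          have kk: "k = k' + q" "k' < q" using False k unfolding k'_def by auto
          have "even (n+k')" using odd \<open>odd q\<close> kk by auto
          then have "tm (n+k') \<noteq> tm (n+k'+1)" using ev by blast
          moreover have "tm (n+k') = tm (n+k'+q)" using less.prems(2) kk by auto
          moreover have "tm (n+(k'+1)) = tm (n+(k'+1)+q)" using less.prems(2)[rule_format, of "k'+1"] kk by simp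
          ultimately show ?thesis using kk by (simp add: add.commute add.left_commute)
        qed
      qed
    qed
    show False
    proof (cases "q = 1")
      case True
      have "tm (n+0) = tm (n+0+q)" using less.prems(2) by blast
      moreover have "tm (n+0) \<noteq> tm (n+0+1)" using A[rule_format, of 0] True by simp
      ultimately show False using True by simp
    next
      case q1: False
      with \<open>odd q\<close> less.prems(1) have "q \<ge> 3" by presburger
      note q3 = this
      have a0: "tm (n+0) \<noteq> tm (n+0+1)" by (rule A[rule_format]) (use q3 in simp)
      have a1: "tm (n+1) \<noteq> tm (n+1+1)" by (rule A[rule_format]) (use q3 in simp)
      have a2: "tm (n+2) \<noteq> tm (n+2+1)" by (rule A[rule_format]) (use q3 in simp)
      have a3: "tm (n+3) \<noteq> tm (n+3+1)" by (rule A[rule_format]) (use q3 in simp)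
      have ar: "n+0+1 = n+1" "n+1+1 = n+2" "n+2+1 = n+3" "n+3+1 = n+4" "n+0 = n" by simp_all
      have b0: "tm n \<noteq> tm (n+1)" using a0 unfolding ar .
      have b1: "tm (n+1) \<noteq> tm (n+2)" using a1 unfolding ar .
      have b2: "tm (n+2) \<noteq> tm (n+3)" using a2 unfolding ar .
      have b3: "tm (n+3) \<noteq> tm (n+4)" using a3 unfolding ar .
      have eq: "tm n = tm (n+2)" "tm (n+2) = tm (n+4)" using b0 b1 b2 b3 by argo+
      define c where "c = n div 2"
      show False
      proof (cases "even n")
        case True
        then have w: "n = 2*c" "n+2 = 2*(Suc c)" "n+4 = 2*(Suc (Suc c))" unfolding c_def by auto
        have "tm n = tm c" "tm (n+2) = tm (Suc c)" "tm (n+4) = tm (Suc (Suc c))"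
          by (simp only: w(1) tm_even, simp only: w(2) tm_even, simp only: w(3) tm_even)
        then show False using eq no_cube[of c] by argo
      next
        case False
        then have w: "n = Suc (2*c)" "n+2 = Suc (2*(Suc c))" "n+4 = Suc (2*(Suc (Suc c)))" unfolding c_def
          by (auto elim!: oddE)
        have "tm n = (\<not> tm c)" "tm (n+2) = (\<not> tm (Suc c))" "tm (n+4) = (\<not> tm (Suc (Suc c)))"
          by (simp only: w(1) tm_odd, simp only: w(2) tm_odd, simp only: w(3) tm_odd)
        then show False using eq no_cube[of c] by argo
      qed
    qed
  qed
qed

definition Y :: "int \<Rightarrow> bool" where "Y k = tm (6 + nat \<bar>k\<bar>)"

lemma Y_sym: "Y (-k) = Y k" by (simp add: Y_def)

definition per :: "int \<Rightarrow> nat \<Rightarrow> nat \<Rightarrow> bool" where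
  "per s L q \<longleftrightarrow> (\<forall>x::nat. x + q < L \<longrightarrow> Y (s + int x) = Y (s + int x + int q))"

lemma per_refl: assumes "per s L q" shows "per (-(s + int L - 1)) L q"
  unfolding per_def
proof (intro allI impI)
  fix x :: nat assume x: "x + q < L"
  define x2 where "x2 = L - 1 - x - q"
  have "x2 + q < L" using x unfolding x2_def by auto
  then have h: "Y (s + int x2) = Y (s + int x2 + int q)" using assms unfolding per_def by blast
  have e1: "s + int x2 + int q = - (- (s + int L - 1) + int x)" using x unfolding x2_def by auto
  have e2: "s + int x2 = - (- (s + int L - 1) + int x + int q)" using x unfolding x2_def by auto
  have A: "Y (- (s + int L - 1) + int x) = Y (s + int x2 + int q)" by (metis e1 Y_sym)
  have B: "Y (- (s + int L - 1) + int x + int q) = Y (s + int x2)" by (metis e2 Y_sym)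
  show "Y (- (s + int L - 1) + int x) = Y (- (s + int L - 1) + int x + int q)"
    using h A B by simp
qed

lemma right_part:
  assumes "per s L q" "1 \<le> q" "x0 + 2*q < L" "s + int x0 \<ge> 1"
  shows False
proof -
  define n where "n = 6 + nat (s + int x0)"
  have "\<forall>i\<le>q. tm (n+i) = tm (n+i+q)"
  proof (intro allI impI)
    fix i assume i: "i \<le> q"
    have "(x0 + i) + q < L" using i assms(3) by auto
    then have h: "Y (s + int (x0+i)) = Y (s + int (x0+i) + int q)" using assms(1) unfolding per_def by blast
    have n1: "nat \<bar>s + int (x0+i)\<bar> = nat (s + int x0) + i" using assms(4) by (simp add: nat_eq_iff)
    have n2: "nat \<bar>s + int (x0+i) + int q\<bar> = nat (s + int x0) + i + q" using assms(4) by (simp add: nat_eq_iff)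
    have "Y (s + int (x0+i)) = tm (n+i)" unfolding Y_def n_def n1 by (simp add: add.assoc)
    moreover have "Y (s + int (x0+i) + int q) = tm (n+i+q)" unfolding Y_def n_def n2 by (simp add: add.assoc)
    ultimately show "tm (n+i) = tm (n+i+q)" using h by simp
  qed
  then show False using overlap_free assms(2) by blast
qed

fun nr :: "nat \<Rightarrow> nat \<Rightarrow> bool list \<Rightarrow> bool" where
  "nr k c [] = True"
| "nr k c (x#xs) = (if x then (if Suc c < k then nr k (Suc c) xs else False) else nr k 0 xs)"

lemma nr_run: "nr k c xs \<Longrightarrow> 0 < m \<Longrightarrow> m \<le> length xs \<Longrightarrow> \<forall>d<m. xs!d \<Longrightarrow> c + m < k"
proof (induction xs arbitrary: c m)
  case Nil then show ?case by simp
next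
  case (Cons x xs)
  have x: x using Cons.prems(2,4) by (metis nth_Cons_0)
  then have sc: "Suc c < k" and nr: "nr k (Suc c) xs" using Cons.prems(1) by (auto split: if_splits)
  show ?case
  proof (cases "m = 1")
    case True then show ?thesis using sc by simp
  next
    case False
    have "Suc c + (m - 1) < k"
    proof (rule Cons.IH[OF nr])
      show "0 < m - 1" using False Cons.prems(2) by simp
      show "m - 1 \<le> length xs" using Cons.prems(3) by simp
      show "\<forall>d<m - 1. xs ! d" using Cons.prems(4) by (metis less_diff_conv nth_Cons_Suc Suc_eq_plus1)
    qed
    then show ?thesis using Cons.prems(2) by simp
  qed
qed

lemma nr_drop: "nr k c xs \<Longrightarrow> \<exists>c'. nr k c' (drop b xs)"
proof (induction xs arbitrary: c b)
  case Nil then show ?case by auto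
next
  case (Cons x xs)
  show ?case
  proof (cases b)
    case 0 then show ?thesis using Cons.prems by (intro exI[of _ c]) simp
  next
    case (Suc b')
    obtain c2 where "nr k c2 xs" using Cons.prems by (auto split: if_splits)
    then show ?thesis using Cons.IH Suc by auto
  qed
qed

definition ys :: "bool list" where "ys = map (\<lambda>i. Y (int i - 88)) [0..<177]"

lemma fc_check: "list_all (\<lambda>q. nr (7*q div 3 + 1 - q) 0 (map2 (=) ys (drop q ys))) [1..<45]"
  by code_simp

lemma fc:
  assumes "per s L q" "1 \<le> q" "q \<le> 44" "s \<ge> -88" "s + int L - 1 \<le> 88"
  shows "3*L \<le> 7*q"
proof (rule ccontr)
  assume "\<not> 3*L \<le> 7*q"
  then have L: "7*q < 3*L" by simp
  define K where "K = 7*q div 3 + 1 - q"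
  define ms where "ms = map2 (=) ys (drop q ys)"
  have "nr K 0 ms" using fc_check assms(2,3) unfolding K_def ms_def list_all_iff by auto
  define b where "b = nat (s + 88)"
  obtain c' where nrd: "nr K c' (drop b ms)" using nr_drop[OF \<open>nr K 0 ms\<close>] by blast
  have M: "7*q div 3 + 1 \<le> L" using L by linarith
  have K0: "0 < K" unfolding K_def by linarith
  have lys: "length ys = 177" unfolding ys_def by simp
  have bL: "b + L \<le> 177" unfolding b_def using assms(4,5) by linarith
  have lms: "length ms = 177 - q" unfolding ms_def using lys by simp
  have "c' + K < K"
  proof (rule nr_run[OF nrd K0])
    show "K \<le> length (drop b ms)" using lms bL M unfolding K_def by simp
    show "\<forall>d<K. drop b ms ! d"
    proof (intro allI impI)
      fix d assume d: "d < K"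
      have dq: "d + q < L" using d M unfolding K_def by linarith
      have i1: "b + d < 177 - q" using d bL M unfolding K_def by linarith
      have "drop b ms ! d = ms ! (b + d)" using i1 lms by simp
      also have "\<dots> = (ys ! (b+d) = ys ! (b + d + q))" unfolding ms_def using i1 lys
        by (simp add: add.commute add.left_commute)
      also have "ys ! (b+d) = Y (s + int d)"
      proof -
        have "b + d < 177" using i1 by simp
        then have "ys ! (b+d) = Y (int (b+d) - 88)" unfolding ys_def by simp
        moreover have "int (b+d) - 88 = s + int d" unfolding b_def using assms(4) by simp
        ultimately show ?thesis by metis
      qed
      also have "ys ! (b+d+q) = Y (s + int d + int q)"
      proof -
        have "b + d + q < 177" using i1 by simp
        then have "ys ! (b+d+q) = Y (int (b+d+q) - 88)" unfolding ys_def by (simp del: of_nat_add)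
        moreover have "int (b+d+q) - 88 = s + int d + int q" unfolding b_def using assms(4) by simp
        ultimately show ?thesis by metis
      qed
      finally show "drop b ms ! d" using assms(1) dq unfolding per_def by blast
    qed
  qed
  then show False by simp
qed

lemma Y_int: "Y (int k) = tm (6 + k)" by (simp add: Y_def)
lemma Y_nint: "Y (- int k) = tm (6 + k)" by (simp add: Y_def)

lemma core_cross:
  assumes "per s L q" "1 \<le> q" "s \<le> 0" "- s \<le> s + int L - 1"
  shows "3*L \<le> 7*q"
proof -
  have j2: "s + int L - 1 \<le> 2 * int q"
  proof (rule ccontr)
    assume "\<not> s + int L - 1 \<le> 2 * int q"
    then have "nat (1 - s) + 2*q < L" using assms(3) by linarith
    moreover have "s + int (nat (1 - s)) \<ge> 1" using assms(3) by simp
    ultimately show False using right_part[OF assms(1,2)] by blast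
  qed
  show ?thesis
  proof (cases "q \<le> 44")
    case True
    then show ?thesis using fc[OF assms(1,2) True] j2 assms(3,4) by linarith
  next
    case False
    show ?thesis
    proof (rule ccontr)
      assume "\<not> 3*L \<le> 7*q"
      then have L: "7*q < 3*L" by simp
      have jq: "s + int L - 1 \<ge> int q + 7" using L False assms(4) by linarith
      have a7: "- s \<ge> 7" using L j2 False by linarith
      have "\<forall>i<7. tm (7+i) = tm ((7+q)+i)"
      proof (intro allI impI)
        fix i :: nat assume i: "i < 7"
        define x where "x = nat (1 - s) + i"
        have "x + q < L" unfolding x_def using i jq assms(3) by linarith
        then have h: "Y (s + int x) = Y (s + int x + int q)" using assms(1) unfolding per_def by blast
        have e1: "s + int x = int (1 + i)" unfolding x_def using assms(3) by simp
        have e2: "s + int x + int q = int (1 + i + q)" unfolding x_def using assms(3) by simp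
        have A: "Y (s + int x) = tm (7+i)" by (simp only: e1 Y_int) simp
        have B: "Y (s + int x + int q) = tm ((7+q)+i)" by (simp only: e2 Y_int) (simp add: algebra_simps)
        show "tm (7+i) = tm ((7+q)+i)" using h A B by simp
      qed
      then have "7 mod 4 = (7 + q) mod 4" by (rule sync1)
      then have q0: "q mod 4 = 0" by presburger
      have "\<forall>i<7. tm ((q-1)+i) = tm (7+(6-i))"
      proof (intro allI impI)
        fix i :: nat assume i: "i < 7"
        define x where "x = nat (-7 - s) + i"
        have "x + q < L" unfolding x_def using i jq a7 by linarith
        then have h: "Y (s + int x) = Y (s + int x + int q)" using assms(1) unfolding per_def by blast
        have e1: "s + int x = - int (7 - i)" unfolding x_def using a7 i by simp
        have e2: "s + int x + int q = int (q - 7 + i)" unfolding x_def using a7 i False by simp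
        have A: "Y (s + int x) = tm (7+(6-i))" by (simp only: e1 Y_nint) (use i in simp)
        have B: "Y (s + int x + int q) = tm ((q-1)+i)" by (simp only: e2 Y_int) (use False in simp)
        show "tm ((q-1)+i) = tm (7+(6-i))" using h A B by simp
      qed
      then have "((q-1) + 7 + 3) mod 4 = 0" by (rule sync2)
      then show False using q0 False by presburger
    qed
  qed
qed

lemma core:
  assumes "per s L q" "1 \<le> q"
  shows "3*L \<le> 7*q"
proof -
  have pos: "3*L \<le> 7*q" if p: "per s' L q" and s1: "s' \<ge> 1" for s'
  proof (rule ccontr)
    assume "\<not> 3*L \<le> 7*q"
    then have "0 + 2*q < L" by linarith
    then show False using right_part[OF p assms(2), of 0] s1 by simp
  qed
  show ?thesis
  proof (cases "L = 0")
    case True then show ?thesis by simp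
  next
    case L0: False
    consider "s \<ge> 1" | "s + int L - 1 \<le> -1" | "s \<le> 0 \<and> 0 \<le> s + int L - 1" by linarith
    then show ?thesis
    proof cases
      case 1 then show ?thesis using pos assms(1) by blast
    next
      case 2 then show ?thesis using pos[OF per_refl[OF assms(1)]] by linarith
    next
      case 3
      show ?thesis
      proof (cases "- s \<le> s + int L - 1")
        case True then show ?thesis using core_cross[OF assms(1,2)] 3 by blast
      next
        case False
        show ?thesis using core_cross[OF per_refl[OF assms(1)] assms(2)] 3 False by linarith
      qed
    qed
  qed
qed

definition ww :: "nat \<Rightarrow> bool list" where
  "ww n = map (\<lambda>i. Y (int i - int n)) [0..<2*n+1]"

lemma ww_nth: "k < 2*n+1 \<Longrightarrow> ww n ! k = Y (int k - int n)"
  unfolding ww_def by (simp del: upt_Suc)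

lemma ww_len: "length (ww n) = 2*n+1" unfolding ww_def by simp

lemma ww_pal: "palindrome (ww n)"
  unfolding palindrome_def
proof (rule nth_equalityI)
  show "length (rev (ww n)) = length (ww n)" by simp
  fix i assume i: "i < length (rev (ww n))"
  then have i': "i < 2*n+1" by (simp add: ww_len)
  have "rev (ww n) ! i = ww n ! (2*n - i)" using i' by (simp add: rev_nth ww_len)
  also have "\<dots> = Y (int (2*n - i) - int n)" using i' by (simp add: ww_nth)
  also have "int (2*n - i) - int n = - (int i - int n)" using i' by simp
  also have "Y (- (int i - int n)) = Y (int i - int n)" by (rule Y_sym)
  also have "\<dots> = ww n ! i" using i' by (simp add: ww_nth)
  finally show "rev (ww n) ! i = ww n ! i" .
qed

lemma sub_bound:
  assumes "sublist u (ww n)" "1 \<le> q" "has_period u q"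
  shows "3 * length u \<le> 7 * q"
proof -
  obtain p r where w: "ww n = p @ u @ r" using assms(1) unfolding sublist_def by blast
  have lw: "length p + length u + length r = 2*n+1" using arg_cong[OF w, of length] by (simp add: ww_len)
  have un: "u ! x = Y (int (length p) - int n + int x)" if "x < length u" for x
  proof -
    have "u ! x = ww n ! (length p + x)" using that unfolding w by (simp add: nth_append)
    also have "\<dots> = Y (int (length p + x) - int n)" using that lw by (simp add: ww_nth)
    also have "int (length p + x) - int n = int (length p) - int n + int x" by simp
    finally show ?thesis .
  qed
  have "per (int (length p) - int n) (length u) q"
    unfolding per_def
  proof (intro allI impI)
    fix x assume x: "x + q < length u"
    have "u ! x = u ! (x + q)" using assms(3) x unfolding has_period_def by blast
    then show "Y (int (length p) - int n + int x) = Y (int (length p) - int n + int x + int q)"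
      using un[of x] un[of "x+q"] x by (simp add: add.assoc)
  qed
  then show ?thesis using core assms(2) by blast
qed

lemma wexp_fin: "finite {of_nat (length u) / of_nat q :: rat | q. 1 \<le> q \<and> q \<le> length u \<and> has_period u q}"
proof -
  have "{of_nat (length u) / of_nat q :: rat | q. 1 \<le> q \<and> q \<le> length u \<and> has_period u q}
        \<subseteq> (\<lambda>q. of_nat (length u) / of_nat q) ` {..length u}" by auto
  then show ?thesis by (rule finite_subset) simp
qed

lemma wexp_ne: "u \<noteq> [] \<Longrightarrow> {of_nat (length u) / of_nat q :: rat | q. 1 \<le> q \<and> q \<le> length u \<and> has_period u q} \<noteq> {}"
proof -
  assume "u \<noteq> []"
  then have "1 \<le> length u" by (cases u) auto
  moreover have "has_period u (length u)" unfolding has_period_def by simp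
  ultimately show ?thesis by blast
qed

lemma rat_bound: "3 * L \<le> 7 * q \<Longrightarrow> 1 \<le> q \<Longrightarrow> (of_nat L / of_nat q :: rat) \<le> 7/3"
proof -
  assume a: "3 * L \<le> 7 * q" "1 \<le> q"
  have "(of_nat (3*L) :: rat) \<le> of_nat (7*q)" using a(1) by (simp only: of_nat_le_iff)
  then have "3 * (of_nat L :: rat) \<le> 7 * of_nat q" by simp
  moreover have "(0::rat) < of_nat q" using a(2) by simp
  ultimately show ?thesis by (simp add: divide_le_eq field_simps)
qed

lemma wexp_le:
  assumes "u \<noteq> []" "sublist u (ww n)"
  shows "word_exp u \<le> 7/3"
  unfolding word_exp_def
proof (rule Max.boundedI[OF wexp_fin wexp_ne[OF assms(1)]])
  fix e assume "e \<in> {of_nat (length u) / of_nat q :: rat | q. 1 \<le> q \<and> q \<le> length u \<and> has_period u q}"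
  then obtain q where e: "e = of_nat (length u) / of_nat q" "1 \<le> q" "has_period u q" by blast
  show "e \<le> 7/3" using rat_bound[OF sub_bound[OF assms(2) e(2,3)] e(2)] e(1) by simp
qed

lemma sublist_fin: "finite {u. sublist u (w :: 'a list)}"
proof -
  have "{u. sublist u w} \<subseteq> (\<lambda>(i,k). take k (drop i w)) ` ({..length w} \<times> {..length w})"
  proof
    fix u assume "u \<in> {u. sublist u w}"
    then obtain p r where w: "w = p @ u @ r" unfolding sublist_def by blast
    then have "u = take (length u) (drop (length p) w)" by simp
    moreover have "length p \<le> length w" "length u \<le> length w" using w by simp_all
    ultimately show "u \<in> (\<lambda>(i,k). take k (drop i w)) ` ({..length w} \<times> {..length w})" by force
  qed
  then show ?thesis by (rule finite_subset) simp
qed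

lemma tm6: "tm 6 = False" "tm 7 = True" "tm 8 = True" "tm 9 = False"
  by (simp_all add: tm.simps)

lemma central:
  assumes "3 \<le> n"
  shows "word_exp (take 7 (drop (n-3) (ww n))) = 7/3" "sublist (take 7 (drop (n-3) (ww n))) (ww n)"
    "take 7 (drop (n-3) (ww n)) \<noteq> []"
proof -
  define u where "u = take 7 (drop (n-3) (ww n))"
  have lu: "length u = 7" unfolding u_def using assms by (simp add: ww_len)
  have un: "u ! i = Y (int i - 3)" if "i < 7" for i
  proof -
    have "u ! i = ww n ! (n - 3 + i)" unfolding u_def using that assms by (simp add: ww_len)
    also have "\<dots> = Y (int (n - 3 + i) - int n)" using that assms by (simp add: ww_nth)
    also have "int (n - 3 + i) - int n = int i - 3" using assms by simp
    finally show ?thesis .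
  qed
  have hp: "has_period u 3" unfolding has_period_def lu
  proof (intro allI impI)
    fix i :: nat assume i: "i + 3 < 7"
    then have "i = 0 \<or> i = 1 \<or> i = 2 \<or> i = 3" by auto
    then show "u ! i = u ! (i+3)" using un i
      by (elim disjE) (simp_all add: Y_def tm6)
  qed
  show "u \<noteq> []" using lu by auto
  show sl: "sublist u (ww n)" unfolding sublist_def u_def
    by (rule exI[of _ "take (n-3) (ww n)"], rule exI[of _ "drop 7 (drop (n-3) (ww n))"]) (simp only: append_take_drop_id)
  show "word_exp u = 7/3"
    unfolding word_exp_def
  proof (rule Max_eqI[OF wexp_fin])
    fix e assume "e \<in> {of_nat (length u) / of_nat q :: rat | q. 1 \<le> q \<and> q \<le> length u \<and> has_period u q}"
    then obtain q where e: "e = of_nat (length u) / of_nat q" "1 \<le> q" "has_period u q" by blast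
    show "e \<le> 7/3" using rat_bound[OF sub_bound[OF sl e(2,3)] e(2)] e(1) by simp
  next
    have "(7/3 :: rat) = of_nat (length u) / of_nat 3" using lu by simp
    then show "(7/3::rat) \<in> {of_nat (length u) / of_nat q :: rat | q. 1 \<le> q \<and> q \<le> length u \<and> has_period u q}"
      using hp lu by force
  qed
qed

theorem mainTheorem3:
  fixes l :: nat
  assumes "odd l" and "l \<ge> 7"
  shows "\<exists>w :: bool list. length w = l \<and> palindrome w \<and> crit_exp w = 7 / 3"
proof -
  obtain n where l: "l = 2*n+1" using assms(1) by (rule oddE)
  have n3: "3 \<le> n" using assms(2) l by simp
  have "crit_exp (ww n) = 7/3"
    unfolding crit_exp_def
  proof (rule Max_eqI)
    have "{word_exp u | u. u \<noteq> [] \<and> sublist u (ww n)} \<subseteq> word_exp ` {u. sublist u (ww n)}" by auto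
    then show "finite {word_exp u | u. u \<noteq> [] \<and> sublist u (ww n)}"
      by (rule finite_subset) (simp add: sublist_fin)
  next
    fix e assume "e \<in> {word_exp u | u. u \<noteq> [] \<and> sublist u (ww n)}"
    then show "e \<le> 7/3" using wexp_le by blast
  next
    show "7/3 \<in> {word_exp u | u. u \<noteq> [] \<and> sublist u (ww n)}"
      using central[OF n3] by force
  qed
  then show ?thesis using ww_pal ww_len l by blast
qed
end
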